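(* Let $K, L, M, N$ be positive integers with $M\le N$. Consider the $K$-user MIMO broadcast channel with $M$ transmit antennas, $N$ antennas at each receiver, symbol extension factor $L$, and no CSIT, as described in the context. Then the maximum achievable SpAC is $\frac{ML-K+1}{ML}$.
   Context: Model: one transmitter with $M$ antennas and $K$ receivers with $N$ antennas each. Over $L$ channel uses, receiver $i\in\{1,\dots,K\}$ observes $\mathbf{y}_i=\mathbf{H}_{i,i}\sum_{j=1}^K\mathbf{Q}_j\mathbf{x}_j+\mathbf{n}_i\in\mathbb{C}^{NL}$, where $\mathbf{H}_{i,i}\in\mathbb{C}^{NL\times ML}$ is block diagonal with $L$ diagonal blocks $\mathbf{H}_{i,i}(t)\in\mathbb{C}^{N\times M}$ (the channel at use $t$), $\mathbf{x}_j\in\mathbb{C}^d$ is the finite-alphabet symbol vector for receiver $j$, $\mathbf{Q}_j\in\mathbb{C}^{ML\times d}$ is its precoder (rank $d$), and $\mathbf{n}_i$ is Gaussian noise. No CSIT: the precoders are fixed and independent of the channel coefficients. At receiver $i$, the desired subspace is $\mathcal{S}_i=\mathrm{span}(\mathbf{H}_{i,i}\mathbf{Q}_i)$ and the interference subspace is $\mathcal{I}_i=\sum_{j\ne i}\mathrm{span}(\mathbf{H}_{i,i}\mathbf{Q}_j)$. A value $d$ is achievable if there exist channel-independent precoders such that, for almost every realization of the channel coefficients, $\mathcal{S}_i\not\subseteq\mathcal{I}_i$ for every receiver $i$. The SpAC of such a scheme is $d/(ML)$ (symbols per transmit antenna per channel use), and the maximum achievable SpAC is the maximum of $d/(ML)$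 over achievable $d$. *)

theory Defs
  imports "HOL-Analysis.Analysis" "Jordan_Normal_Form.DL_Rank"
begin

text \<open>Receivers are indexed by 0..K-1, channel uses by 0..L-1.
  A channel realization is the finite family of complex coefficients
  h (i, t, r, c) = entry (r, c) of the N x M channel matrix of receiver i at channel use t.\<close>

definition chan_idx :: "nat \<Rightarrow> nat \<Rightarrow> nat \<Rightarrow> nat \<Rightarrow> (nat \<times> nat \<times> nat \<times> nat) set" where
  "chan_idx K L N M = {(i, t, r, c). i < K \<and> t < L \<and> r < N \<and> c < M}"

definition channel_measure :: "nat \<Rightarrow> nat \<Rightarrow> nat \<Rightarrow> nat \<Rightarrow> (nat \<times> nat \<times> nat \<times> nat \<Rightarrow> complex) measure" where
  "channel_measure K L N M = PiM (chan_idx K L N M) (\<lambda>_. (lborel :: complex measure))"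

text \<open>The NL x ML block-diagonal matrix H_{i,i}, whose t-th diagonal block is H_{i,i}(t).\<close>
definition chan_mat :: "nat \<Rightarrow> nat \<Rightarrow> nat \<Rightarrow> (nat \<times> nat \<times> nat \<times> nat \<Rightarrow> complex) \<Rightarrow> nat \<Rightarrow> complex mat" where
  "chan_mat L N M h i = mat (N * L) (M * L)
     (\<lambda>(p, q). if p div N = q div M then h (i, p div N, p mod N, q mod M) else 0)"

definition desired_space :: "nat \<Rightarrow> nat \<Rightarrow> nat \<Rightarrow> (nat \<times> nat \<times> nat \<times> nat \<Rightarrow> complex)
    \<Rightarrow> (nat \<Rightarrow> complex mat) \<Rightarrow> nat \<Rightarrow> complex vec set" where
  "desired_space L N M h Q i = vec_space.col_space (N * L) (chan_mat L N M h i * Q i)"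

definition interference_space :: "nat \<Rightarrow> nat \<Rightarrow> nat \<Rightarrow> nat \<Rightarrow> (nat \<times> nat \<times> nat \<times> nat \<Rightarrow> complex)
    \<Rightarrow> (nat \<Rightarrow> complex mat) \<Rightarrow> nat \<Rightarrow> complex vec set" where
  "interference_space K L N M h Q i =
     module.span class_ring (module_vec TYPE(complex) (N * L))
       (\<Union>j \<in> {j. j < K \<and> j \<noteq> i}. set (cols (chan_mat L N M h i * Q j)))"

definition achievable :: "nat \<Rightarrow> nat \<Rightarrow> nat \<Rightarrow> nat \<Rightarrow> nat \<Rightarrow> bool" where
  "achievable K L M N d \<longleftrightarrow>
     (\<exists>Q :: nat \<Rightarrow> complex mat.
        (\<forall>j < K. Q j \<in> carrier_mat (M * L) d \<and> vec_space.rank (M * L) (Q j) = d) \<and>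
        (AE h in channel_measure K L N M.
           \<forall>i < K. \<not> desired_space L N M h Q i \<subseteq> interference_space K L N M h Q i))"

definition SpAC_set :: "nat \<Rightarrow> nat \<Rightarrow> nat \<Rightarrow> nat \<Rightarrow> real set" where
  "SpAC_set K L M N = {real d / real (M * L) | d. achievable K L M N d}"

end

theory Submission
  imports Defs
begin


lemma mult_mat_vec_zero_right:
  assumes H: "(H :: 'a :: semiring_0 mat) \<in> carrier_mat m n"
  shows "H *\<^sub>v 0\<^sub>v n = 0\<^sub>v m"
  using H by (intro eq_vecI) (auto simp: row_def)

lemma submodule_preimage:
  fixes H :: "complex mat"
  assumes H: "H \<in> carrier_mat m n"
    and W: "submodule class_ring W (module_vec TYPE(complex) m)"
  shows "submodule class_ring {x \<in> carrier_vec n. H *\<^sub>v x \<in> W} (module_vec TYPE(complex) n)"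
proof -
  interpret Vm: vec_space "TYPE(complex)" m .
  interpret Vn: vec_space "TYPE(complex)" n .
  interpret W: submodule class_ring W "module_vec TYPE(complex) m" by (rule W)
  show ?thesis
  proof (rule submodule.intro)
    show "Module.module class_ring (module_vec TYPE(complex) n)" by (rule Vn.module_axioms)
    show "{x \<in> carrier_vec n. H *\<^sub>v x \<in> W} \<subseteq> carrier (module_vec TYPE(complex) n)" by auto
    fix v w assume "v \<in> {x \<in> carrier_vec n. H *\<^sub>v x \<in> W}" "w \<in> {x \<in> carrier_vec n. H *\<^sub>v x \<in> W}"
    then show "v \<oplus>\<^bsub>module_vec TYPE(complex) n\<^esub> w \<in> {x \<in> carrier_vec n. H *\<^sub>v x \<in> W}"
      using W.m_closed H by (auto simp: mult_add_distrib_mat_vec)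
  next
    show "\<zero>\<^bsub>module_vec TYPE(complex) n\<^esub> \<in> {x \<in> carrier_vec n. H *\<^sub>v x \<in> W}"
      using W.zero_closed H by (auto simp: mult_mat_vec_zero_right)
  next
    fix c :: complex and v assume "c \<in> carrier class_ring" "v \<in> {x \<in> carrier_vec n. H *\<^sub>v x \<in> W}"
    then show "c \<odot>\<^bsub>module_vec TYPE(complex) n\<^esub> v \<in> {x \<in> carrier_vec n. H *\<^sub>v x \<in> W}"
      using W.smult_closed H by (auto simp: mult_mat_vec)
  qed
qed

lemma submodule_kernel:
  fixes phi :: "complex vec"
  assumes phi: "phi \<in> carrier_vec m"
  shows "submodule class_ring {x \<in> carrier_vec m. scalar_prod phi x = 0} (module_vec TYPE(complex) m)"
proof -
  interpret Vm: vec_space "TYPE(complex)" m .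
  show ?thesis
  proof (rule submodule.intro)
    show "Module.module class_ring (module_vec TYPE(complex) m)" by (rule Vm.module_axioms)
    show "{x \<in> carrier_vec m. scalar_prod phi x = 0} \<subseteq> carrier (module_vec TYPE(complex) m)" by auto
    fix v w assume "v \<in> {x \<in> carrier_vec m. scalar_prod phi x = 0}" "w \<in> {x \<in> carrier_vec m. scalar_prod phi x = 0}"
    then show "v \<oplus>\<^bsub>module_vec TYPE(complex) m\<^esub> w \<in> {x \<in> carrier_vec m. scalar_prod phi x = 0}"
      using phi by (auto simp: scalar_prod_add_distrib[of _ m])
  next
    show "\<zero>\<^bsub>module_vec TYPE(complex) m\<^esub> \<in> {x \<in> carrier_vec m. scalar_prod phi x = 0}"
      using phi by auto
  next
    fix c :: complex and v assume "c \<in> carrier class_ring" "v \<in> {x \<in> carrier_vec m. scalar_prod phi x = 0}"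
    then show "c \<odot>\<^bsub>module_vec TYPE(complex) m\<^esub> v \<in> {x \<in> carrier_vec m. scalar_prod phi x = 0}"
      using phi by (auto simp: scalar_prod_smult_distrib[of _ m])
  qed
qed

lemma converse_bound:
  fixes Q Hs :: "nat \<Rightarrow> complex mat"
  assumes K: "0 < K"
    and Q: "\<forall>j<K. Q j \<in> carrier_mat n d \<and> vec_space.rank n (Q j) = d"
    and Hs: "\<forall>i<K. Hs i \<in> carrier_mat m n"
    and cond: "\<forall>i<K. \<not> vec_space.col_space m (Hs i * Q i) \<subseteq>
       module.span class_ring (module_vec TYPE(complex) m) (\<Union>j\<in>{j. j<K \<and> j\<noteq>i}. set (cols (Hs i * Q j)))"
  shows "d + K - 1 \<le> n"
proof -
  interpret Vn: vec_space "TYPE(complex)" n .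
  interpret Vm: vec_space "TYPE(complex)" m .
  define T where "T i = Vn.span (\<Union>j\<in>{j. j<K \<and> j\<noteq>i}. set (cols (Q j)))" for i
  define IS where "IS i = Vm.span (\<Union>j\<in>{j. j<K \<and> j\<noteq>i}. set (cols (Hs i * Q j)))" for i
  have gensT: "(\<Union>j\<in>{j. j<K \<and> j\<noteq>i}. set (cols (Q j))) \<subseteq> carrier_vec n" for i
    using Q by (auto simp: cols_def)
  have gensI: "(\<Union>j\<in>{j. j<K \<and> j\<noteq>i}. set (cols (Hs i * Q j))) \<subseteq> carrier_vec m" if "i < K" for i
  proof
    fix x assume "x \<in> (\<Union>j\<in>{j. j<K \<and> j\<noteq>i}. set (cols (Hs i * Q j)))"
    then obtain j where j: "j < K" "x \<in> set (cols (Hs i * Q j))" by auto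
    have "Hs i * Q j \<in> carrier_mat m d" using Q Hs j that by auto
    thus "x \<in> carrier_vec m" using j cols_dim by blast
  qed
  have ex: "\<exists>v. v \<in> set (cols (Q i)) \<and> v \<notin> T i" if i: "i < K" for i
  proof (rule ccontr)
    assume "\<not> ?thesis"
    hence sub: "set (cols (Q i)) \<subseteq> T i" by auto
    have HsI: "Hs i \<in> carrier_mat m n" and QI: "Q i \<in> carrier_mat n d" using Hs Q i by auto
    have subI: "submodule class_ring (IS i) (module_vec TYPE(complex) m)"
      unfolding IS_def by (rule Vm.span_is_submodule[OF gensI[OF i]])
    let ?P = "{x \<in> carrier_vec n. Hs i *\<^sub>v x \<in> IS i}"
    have subP: "submodule class_ring ?P (module_vec TYPE(complex) n)"
      by (rule submodule_preimage[OF HsI subI])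
    have "(\<Union>j\<in>{j. j<K \<and> j\<noteq>i}. set (cols (Q j))) \<subseteq> ?P"
    proof
      fix x assume "x \<in> (\<Union>j\<in>{j. j<K \<and> j\<noteq>i}. set (cols (Q j)))"
      then obtain j c where j: "j < K" "j \<noteq> i" and c: "c < d" and x: "x = col (Q j) c"
        using Q by (auto simp: cols_def)
      have Qj: "Q j \<in> carrier_mat n d" using Q j by auto
      have "Hs i *\<^sub>v x = col (Hs i * Q j) c" using col_mult2[OF HsI Qj c] x by simp
      also have "\<dots> \<in> set (cols (Hs i * Q j))" using c Qj HsI by (auto simp: cols_def)
      also have "set (cols (Hs i * Q j)) \<subseteq> IS i" unfolding IS_def
        using Vm.in_own_span[OF gensI[OF i]] j by blast
      finally show "x \<in> ?P" using x Qj c by auto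
    qed
    hence TP: "T i \<subseteq> ?P" unfolding T_def by (rule Vn.span_is_subset[OF _ subP])
    have "set (cols (Hs i * Q i)) \<subseteq> IS i"
    proof
      fix y assume "y \<in> set (cols (Hs i * Q i))"
      then obtain c where c: "c < d" and y: "y = col (Hs i * Q i) c"
        using QI HsI by (auto simp: cols_def)
      have "col (Q i) c \<in> set (cols (Q i))" using c QI by (auto simp: cols_def)
      hence "col (Q i) c \<in> ?P" using sub TP by blast
      thus "y \<in> IS i" using col_mult2[OF HsI QI c] y by simp
    qed
    hence "Vm.span (set (cols (Hs i * Q i))) \<subseteq> IS i"
      by (rule Vm.span_is_subset[OF _ subI])
    thus False using cond i unfolding IS_def Vm.col_space_def by blast
  qed
  then obtain v where v: "\<And>i. i < K \<Longrightarrow> v i \<in> set (cols (Q i)) \<and> v i \<notin> T i" by metis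
  have Q0: "Q 0 \<in> carrier_mat n d" and rk0: "Vn.rank (Q 0) = d" using Q K by auto
  obtain S where S: "maximal S (\<lambda>T. T \<subseteq> set (cols (Q 0)) \<and> Vn.lin_indpt T)"
    using maximal_exists[of "(\<lambda>T. T \<subseteq> set (cols (Q 0)) \<and> Vn.lin_indpt T)" "card (set (cols (Q 0)))" "{}"]
    by (meson List.finite_set card_mono empty_iff empty_subsetI Vn.finite_lin_indpt2 rev_finite_subset)
  have cardS: "card S = d" using Vn.rank_card_indpt[OF Q0 S] rk0 by simp
  have SQ: "S \<subseteq> set (cols (Q 0))" and Sli: "Vn.lin_indpt S" using S unfolding maximal_def by auto
  have vcar: "v i \<in> carrier_vec n" if "i < K" for i using v[OF that] Q that by (auto simp: cols_def)
  define B where "B k = S \<union> v ` {1..<k}" for k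
  have main: "1 \<le> k \<Longrightarrow> k \<le> K \<Longrightarrow> Vn.lin_indpt (B k) \<and> card (B k) = d + k - 1 \<and> B k \<subseteq> carrier_vec n \<and> finite (B k)" for k
  proof (induction k)
    case 0 then show ?case by simp
  next
    case (Suc k)
    show ?case
    proof (cases "k = 0")
      case True
      have "B (Suc k) = S" unfolding B_def using True by auto
      moreover have "S \<subseteq> carrier_vec n" using SQ Q0 by (auto simp: cols_def)
      moreover have "finite S" using SQ finite_subset by blast
      ultimately show ?thesis using Sli cardS True by auto
    next
      case False
      then have IH: "Vn.lin_indpt (B k) \<and> card (B k) = d + k - 1 \<and> B k \<subseteq> carrier_vec n \<and> finite (B k)"
        using Suc by auto
      have kK: "k < K" using Suc by auto
      have BT: "B k \<subseteq> (\<Union>j\<in>{j. j<K \<and> j\<noteq>k}. set (cols (Q j)))"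
      proof
        fix x assume "x \<in> B k"
        then consider "x \<in> S" | i where "i \<in> {1..<k}" "x = v i" unfolding B_def by auto
        then show "x \<in> (\<Union>j\<in>{j. j<K \<and> j\<noteq>k}. set (cols (Q j)))"
        proof cases
          case 1 then show ?thesis using SQ K False by blast
        next
          case 2
          then have "i < K" "i \<noteq> k" using kK by auto
          then show ?thesis using v[of i] 2 by blast
        qed
      qed
      have "Vn.span (B k) \<subseteq> T k" unfolding T_def by (rule Vn.span_is_monotone[OF BT])
      hence nsp: "v k \<notin> Vn.span (B k)" using v[OF kK] by blast
      have nin: "v k \<notin> B k" using nsp Vn.in_own_span[of "B k"] IH by blast
      have li: "Vn.lin_indpt (B k \<union> {v k})"
        using Vn.lin_dep_iff_in_span[of "B k" "v k"] IH vcar[OF kK] nin nsp by auto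
      have eq: "B (Suc k) = B k \<union> {v k}" unfolding B_def using False by (auto simp: atLeastLessThanSuc)
      show ?thesis using li IH nin vcar[OF kK] False unfolding eq by auto
    qed
  qed
  have fin: "B K \<subseteq> carrier_vec n" "Vn.lin_indpt (B K)" "card (B K) = d + K - 1"
    using main[of K] K by auto
  have "card (B K) \<le> n" using Vn.li_le_dim(2)[OF Vn.fin_dim fin(1,2)] Vn.dim_is_n by simp
  thus ?thesis using fin by simp
qed



abbreviation CM :: "'i set \<Rightarrow> ('i \<Rightarrow> complex) measure" where
  "CM I \<equiv> PiM I (\<lambda>_. (lborel :: complex measure))"

lemma space_CM_nonnull:
  assumes "finite I"
  shows "emeasure (CM I) (space (CM I)) \<noteq> 0"
proof -
  interpret product_sigma_finite "\<lambda>_. (lborel :: complex measure)" by standard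
  have "space (CM I) = (\<Pi>\<^sub>E i\<in>I. UNIV)" by (simp add: space_PiM)
  hence "emeasure (CM I) (space (CM I)) = (\<Prod>i\<in>I. emeasure lborel (UNIV :: complex set))"
    using emeasure_PiM[OF assms, of "\<lambda>_. UNIV"] by simp
  thus ?thesis by (simp add: ennreal_prod_eq_0)
qed

lemma coord_null:
  fixes g :: "('i \<Rightarrow> complex) \<Rightarrow> complex"
  assumes I: "finite I" and k: "k \<in> I"
    and g: "g \<in> borel_measurable (CM I)"
    and gind: "\<And>x y. g (x(k := y)) = g x"
  shows "{h \<in> space (CM I). h k = g h} \<in> null_sets (CM I)"
proof -
  interpret product_sigma_finite "\<lambda>_. (lborel :: complex measure)" by standard
  define J where "J = I - {k}"
  have IJ: "I = insert k J" and kJ: "k \<notin> J" and fJ: "finite J" using k I unfolding J_def by auto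
  define Z where "Z = {h \<in> space (CM I). h k = g h}"
  have "(\<lambda>h. h k - g h) \<in> borel_measurable (CM I)"
  proof (rule borel_measurable_diff[OF _ g])
    show "(\<lambda>h. h k) \<in> borel_measurable (CM I)"
      using measurable_component_singleton[OF k, of "\<lambda>_. (lborel :: complex measure)"] by (simp add: measurable_lborel1)
  qed
  hence "(\<lambda>h. h k - g h) -` {0} \<inter> space (CM I) \<in> sets (CM I)" by (rule borel_measurable_vimage)
  moreover have "(\<lambda>h. h k - g h) -` {0} \<inter> space (CM I) = Z" unfolding Z_def by auto
  ultimately have Zs: "Z \<in> sets (CM I)" by simp
  have "emeasure (CM I) Z = integral\<^sup>N (CM I) (indicator Z)" using Zs by (simp add: nn_integral_indicator)
  also have "\<dots> = (\<integral>\<^sup>+ x. (\<integral>\<^sup>+ y. indicator Z (x(k := y)) \<partial>lborel) \<partial>CM J)"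
    unfolding IJ
    by (rule product_nn_integral_insert[OF fJ kJ]) (use Zs IJ in auto)
  also have "\<dots> = (\<integral>\<^sup>+ x. 0 \<partial>CM J)"
  proof (rule nn_integral_cong)
    fix x assume x: "x \<in> space (CM J)"
    have "(\<integral>\<^sup>+ y. indicator Z (x(k := y)) \<partial>lborel) = (\<integral>\<^sup>+ y. indicator {g x} y \<partial>lborel)"
    proof (rule nn_integral_cong)
      fix y :: complex
      have "x(k := y) \<in> space (CM I)" using x unfolding IJ by (auto simp: space_PiM PiE_def extensional_def)
      thus "indicator Z (x(k := y)) = (indicator {g x} y :: ennreal)"
        unfolding Z_def using gind[of x y] by (auto simp: indicator_def gind)
    qed
    also have "\<dots> = emeasure lborel {g x}" by (simp add: nn_integral_indicator)
    also have "\<dots> = 0" by (simp add: emeasure_lborel_countable)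
    finally show "(\<integral>\<^sup>+ y. indicator Z (x(k := y)) \<partial>lborel) = 0" .
  qed
  also have "\<dots> = 0" by simp
  finally show ?thesis using Zs unfolding Z_def by auto
qed

lemma det_mat_expand:
  "det (mat m m f) = (\<Sum>p\<in>{p. p permutes {0..<m}}. of_int (sign p) * (\<Prod>i\<in>{0..<m}. f (i, p i)))"
  unfolding det_def
  by (auto intro!: sum.cong prod.cong simp: permutes_in_image)

lemma det_meas:
  assumes "\<forall>r<m. \<forall>c<m. \<sigma> (r, c) \<in> I"
  shows "(\<lambda>h. det (mat m m (\<lambda>(r, c). h (\<sigma> (r, c))))) \<in> borel_measurable (CM I)"
  unfolding det_mat_expand
proof (intro borel_measurable_sum borel_measurable_times borel_measurable_const borel_measurable_prod)
  fix p i assume p: "p \<in> {p. p permutes {0..<m}}" and i: "i \<in> {0..<m}"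
  have "p i < m" using p i by (auto simp: permutes_in_image)
  hence "\<sigma> (i, p i) \<in> I" using assms i by auto
  thus "(\<lambda>x. case (i, p i) of (r, c) \<Rightarrow> x (\<sigma> (r, c))) \<in> borel_measurable (CM I)"
    using measurable_component_singleton[of "\<sigma> (i, p i)" I "\<lambda>_. (lborel :: complex measure)"]
    by (simp add: measurable_lborel1)
qed

lemma det_null:
  assumes I: "finite I"
  shows "(\<forall>r<m. \<forall>c<m. \<sigma> (r, c) \<in> I) \<Longrightarrow> inj_on \<sigma> ({..<m} \<times> {..<m}) \<Longrightarrow>
    \<exists>N\<in>null_sets (CM I). {h \<in> space (CM I). det (mat m m (\<lambda>(r, c). h (\<sigma> (r, c)))) = 0} \<subseteq> N"
proof (induction m arbitrary: \<sigma>)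
  case 0
  have "det (mat 0 0 f) = 1" for f :: "nat \<times> nat \<Rightarrow> complex"
  proof -
    have "mat 0 0 f = 1\<^sub>m 0" by (rule eq_matI) auto
    thus ?thesis by simp
  qed
  thus ?case by auto
next
  case (Suc m)
  define k where "k = \<sigma> (0, 0)"
  define \<tau> where "\<tau> j = (\<lambda>(r, c). \<sigma> (Suc r, if c < j then c else Suc c))" for j
  define D where "D j h = det (mat m m (\<lambda>a. h (\<tau> j a)))" for j and h :: "'a \<Rightarrow> complex"
  have tauI: "\<forall>r<m. \<forall>c<m. \<tau> j (r, c) \<in> I" if "j \<le> m" for j
    using Suc.prems(1) that unfolding \<tau>_def by auto
  have tau_inj: "inj_on (\<tau> j) ({..<m} \<times> {..<m})" for j
  proof (rule inj_onI)
    fix a b assume a: "a \<in> {..<m} \<times> {..<m}" and b: "b \<in> {..<m} \<times> {..<m}" and e: "\<tau> j a = \<tau> j b"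
    obtain r c r' c' where ab: "a = (r, c)" "b = (r', c')" by (cases a, cases b) auto
    let ?u = "(Suc r, if c < j then c else Suc c)" and ?v = "(Suc r', if c' < j then c' else Suc c')"
    have "\<sigma> ?u = \<sigma> ?v" using e ab unfolding \<tau>_def by simp
    moreover have "?u \<in> {..<Suc m} \<times> {..<Suc m}" "?v \<in> {..<Suc m} \<times> {..<Suc m}" using a b ab by auto
    ultimately have "?u = ?v" using inj_onD[OF Suc.prems(2)] by blast
    thus "a = b" using ab by (auto split: if_splits)
  qed
  have tau_k: "\<tau> j (r, c) \<noteq> k" if "r < m" "c < m" for j r c
  proof
    assume "\<tau> j (r, c) = k"
    hence "\<sigma> (Suc r, if c < j then c else Suc c) = \<sigma> (0, 0)" unfolding \<tau>_def k_def by simp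
    moreover have "(Suc r, if c < j then c else Suc c) \<in> {..<Suc m} \<times> {..<Suc m}" "(0, 0) \<in> {..<Suc m} \<times> {..<Suc m}"
      using that by auto
    ultimately have "(Suc r, if c < j then c else Suc c) = (0, 0)" using inj_onD[OF Suc.prems(2)] by blast
    thus False by auto
  qed
  have row_k: "\<sigma> (0, Suc j) \<noteq> k" if "j < m" for j
    using inj_onD[OF Suc.prems(2), of "(0, Suc j)" "(0, 0)"] that unfolding k_def by auto
  have lap: "det (mat (Suc m) (Suc m) (\<lambda>(r, c). h (\<sigma> (r, c)))) =
     h k * D 0 h + (\<Sum>j<m. h (\<sigma> (0, Suc j)) * ((-1) ^ Suc j * D (Suc j) h))" for h
  proof -
    let ?A = "mat (Suc m) (Suc m) (\<lambda>(r, c). h (\<sigma> (r, c)))"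
    have del: "mat_delete ?A 0 j = mat m m (\<lambda>a. h (\<tau> j a))" if "j < Suc m" for j
      using that unfolding mat_delete_def \<tau>_def by (intro eq_matI) auto
    have "det ?A = (\<Sum>j<Suc m. ?A $$ (0, j) * cofactor ?A 0 j)"
      by (rule laplace_expansion_row) auto
    also have "\<dots> = ?A $$ (0, 0) * cofactor ?A 0 0 + (\<Sum>j<m. ?A $$ (0, Suc j) * cofactor ?A 0 (Suc j))"
      by (subst sum.lessThan_Suc_shift) simp
    also have "\<dots> = h k * D 0 h + (\<Sum>j<m. h (\<sigma> (0, Suc j)) * ((-1) ^ Suc j * D (Suc j) h))"
      unfolding cofactor_def D_def k_def using del by (auto intro!: sum.cong)
    finally show ?thesis .
  qed
  obtain N1 where N1: "N1 \<in> null_sets (CM I)" "{h \<in> space (CM I). D 0 h = 0} \<subseteq> N1"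
    using Suc.IH[of "\<tau> 0", OF tauI[of 0] tau_inj] unfolding D_def by auto
  define R where "R h = (\<Sum>j<m. h (\<sigma> (0, Suc j)) * ((-1) ^ Suc j * D (Suc j) h))" for h :: "'a \<Rightarrow> complex"
  define g where "g h = - R h / D 0 h" for h
  have Dmeas: "D j \<in> borel_measurable (CM I)" if "j \<le> m" for j
    unfolding D_def[abs_def] using det_meas[OF tauI[OF that]] by (simp add: case_prod_beta')
  have gmeas: "g \<in> borel_measurable (CM I)"
    unfolding g_def[abs_def] R_def[abs_def]
  proof (intro borel_measurable_divide borel_measurable_uminus borel_measurable_sum borel_measurable_times
      borel_measurable_const Dmeas)
    fix j assume j: "j \<in> {..<m}"
    have "\<sigma> (0, Suc j) \<in> I" using Suc.prems(1) j by auto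
    thus "(\<lambda>x. x (\<sigma> (0, Suc j))) \<in> borel_measurable (CM I)"
      using measurable_component_singleton[of "\<sigma> (0, Suc j)" I "\<lambda>_. (lborel :: complex measure)"]
      by (simp add: measurable_lborel1)
  qed auto
  have Dind: "D j (x(k := y)) = D j x" for j x y
  proof -
    have "mat m m (\<lambda>a. (x(k := y)) (\<tau> j a)) = mat m m (\<lambda>a. x (\<tau> j a))"
      using tau_k by (intro eq_matI) auto
    thus ?thesis unfolding D_def by simp
  qed
  have gind: "g (x(k := y)) = g x" for x y
    unfolding g_def R_def Dind using row_k by (auto intro!: sum.cong arg_cong2[where f="(/)"])
  have kI: "k \<in> I" using Suc.prems(1) unfolding k_def by auto
  have Z2: "{h \<in> space (CM I). h k = g h} \<in> null_sets (CM I)"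
    by (rule coord_null[OF I kI gmeas gind])
  show ?case
  proof (intro bexI)
    show "N1 \<union> {h \<in> space (CM I). h k = g h} \<in> null_sets (CM I)" using N1(1) Z2 by auto
    show "{h \<in> space (CM I). det (mat (Suc m) (Suc m) (\<lambda>(r, c). h (\<sigma> (r, c)))) = 0}
      \<subseteq> N1 \<union> {h \<in> space (CM I). h k = g h}"
    proof
      fix h assume h: "h \<in> {h \<in> space (CM I). det (mat (Suc m) (Suc m) (\<lambda>(r, c). h (\<sigma> (r, c)))) = 0}"
      show "h \<in> N1 \<union> {h \<in> space (CM I). h k = g h}"
      proof (cases "D 0 h = 0")
        case True thus ?thesis using N1(2) h by auto
      next
        case False
        have "h k * D 0 h + R h = 0" using h lap[of h] unfolding R_def by auto
        hence "h k = g h" using False unfolding g_def by (simp add: field_simps eq_neg_iff_add_eq_0)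
        thus ?thesis using h by auto
      qed
    qed
  qed
qed



lemma mult_unit_vec_col:
  assumes H: "(H :: complex mat) \<in> carrier_mat m n" and k: "k < n"
  shows "H *\<^sub>v unit_vec n k = col H k"
proof (rule eq_vecI)
  fix p assume "p < dim_vec (col H k)"
  hence p: "p < m" using H by auto
  have "(H *\<^sub>v unit_vec n k) $ p = (\<Sum>q\<in>{0..<n}. H $$ (p, q) * (if q = k then 1 else 0))"
    using H p k by (auto simp: scalar_prod_def row_def intro!: sum.cong)
  also have "\<dots> = H $$ (p, k)" using k by (simp add: sum.If_cases if_distrib cong: if_cong)
  finally show "(H *\<^sub>v unit_vec n k) $ p = col H k $ p" using H p k by simp
qed (use H in auto)

lemma sum_block:
  fixes t L M N :: nat and G :: "nat \<Rightarrow> 'a :: comm_monoid_add"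
  assumes t: "t < L" and MN: "M \<le> N"
  shows "(\<Sum>p\<in>{0..<N*L}. if p div N = t \<and> p mod N < M then G (p mod N) else 0) = (\<Sum>r\<in>{0..<M}. G r)"
proof (cases "M = 0")
  case True
  thus ?thesis by (simp add: True)
next
  case False
  hence N: "N > 0" using MN by auto
  have "(\<Sum>p\<in>{0..<N*L}. if p div N = t \<and> p mod N < M then G (p mod N) else 0)
      = (\<Sum>p\<in>{p \<in> {0..<N*L}. p div N = t \<and> p mod N < M}. G (p mod N))"
    by (rule sum.inter_filter[symmetric]) simp
  also have "{p \<in> {0..<N*L}. p div N = t \<and> p mod N < M} = (\<lambda>r. t * N + r) ` {0..<M}"
  proof (intro equalityI subsetI)
    fix p assume "p \<in> {p \<in> {0..<N*L}. p div N = t \<and> p mod N < M}"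
    hence "p = t * N + p mod N" "p mod N \<in> {0..<M}"
      by (auto simp: mult.commute)
    thus "p \<in> (\<lambda>r. t * N + r) ` {0..<M}" by (rule image_eqI)
  next
    fix p assume "p \<in> (\<lambda>r. t * N + r) ` {0..<M}"
    then obtain r where r0: "r \<in> {0..<M}" "p = t * N + r" by blast
    hence r: "r < M" "p = t * N + r" by auto
    have "t * N + r < t * N + N" using r MN by auto
    also have "\<dots> = (t + 1) * N" by simp
    also have "\<dots> \<le> L * N" using t by (intro mult_right_mono) auto
    finally have "p < N * L" using r by (simp add: mult.commute)
    moreover have "p div N = t" "p mod N = r" using r MN N by auto
    ultimately show "p \<in> {p \<in> {0..<N*L}. p div N = t \<and> p mod N < M}" using r by auto
  qed
  also have "(\<Sum>p\<in>(\<lambda>r. t * N + r) ` {0..<M}. G (p mod N)) = (\<Sum>r\<in>{0..<M}. G ((t * N + r) mod N))"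
    by (subst sum.reindex) (auto simp: inj_on_def)
  also have "\<dots> = (\<Sum>r\<in>{0..<M}. G r)" using MN by (intro sum.cong) auto
  finally show ?thesis .
qed

lemma chan_mat_carrier: "chan_mat L N M h i \<in> carrier_mat (N * L) (M * L)"
  unfolding chan_mat_def by simp

lemma functional_value:
  fixes h :: "nat \<times> nat \<times> nat \<times> nat \<Rightarrow> complex" and i :: nat
  assumes MN: "M \<le> N" and q: "q < M * L"
  defines "t \<equiv> q div M" and "a \<equiv> q mod M"
  defines "B \<equiv> mat M M (\<lambda>(r, c). h (i, t, r, c))"
  defines "phi \<equiv> vec (N * L) (\<lambda>p. if p div N = t \<and> p mod N < M then adj_mat B $$ (a, p mod N) else 0)"
  assumes k: "k < M * L"
  shows "scalar_prod phi (col (chan_mat L N M h i) k) = (if k = q then det B else 0)"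
proof -
  have M: "M > 0" using q by (cases M) auto
  have tL: "t < L" using q M unfolding t_def by (simp add: less_mult_imp_div_less mult.commute)
  have aM: "a < M" using M unfolding a_def by simp
  have BC: "B \<in> carrier_mat M M" unfolding B_def by simp
  have AB: "adj_mat B * B = det B \<cdot>\<^sub>m 1\<^sub>m M" by (rule adj_mat(3)[OF BC])
  have AC: "adj_mat B \<in> carrier_mat M M" by (rule adj_mat(1)[OF BC])
  have "scalar_prod phi (col (chan_mat L N M h i) k) =
      (\<Sum>p\<in>{0..<N*L}. phi $ p * chan_mat L N M h i $$ (p, k))"
    unfolding scalar_prod_def using k by (auto simp: chan_mat_def intro!: sum.cong)
  also have "\<dots> = (\<Sum>p\<in>{0..<N*L}. if p div N = t \<and> p mod N < M then
       (if k div M = t then adj_mat B $$ (a, p mod N) * B $$ (p mod N, k mod M) else 0) else 0)"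
  proof (intro sum.cong refl)
    fix p assume p: "p \<in> {0..<N*L}"
    have kM: "k mod M < M" using M by simp
    show "phi $ p * chan_mat L N M h i $$ (p, k) = (if p div N = t \<and> p mod N < M then
       (if k div M = t then adj_mat B $$ (a, p mod N) * B $$ (p mod N, k mod M) else 0) else 0)"
      using p k kM unfolding phi_def chan_mat_def B_def by auto
  qed
  also have "\<dots> = (\<Sum>r\<in>{0..<M}. if k div M = t then adj_mat B $$ (a, r) * B $$ (r, k mod M) else 0)"
    by (rule sum_block[OF tL MN])
  also have "\<dots> = (if k = q then det B else 0)"
  proof (cases "k div M = t")
    case True
    have kM: "k mod M < M" using M by simp
    have "(\<Sum>r\<in>{0..<M}. adj_mat B $$ (a, r) * B $$ (r, k mod M)) = (adj_mat B * B) $$ (a, k mod M)"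
      using AC BC aM kM by (auto simp: scalar_prod_def row_def col_def intro!: sum.cong)
    also have "\<dots> = (if a = k mod M then det B else 0)" unfolding AB using aM kM by simp
    also have "(a = k mod M) = (k = q)"
      using True unfolding a_def t_def by (metis div_mult_mod_eq)
    finally show ?thesis using True by simp
  next
    case False
    hence "k \<noteq> q" unfolding t_def by auto
    thus ?thesis using False by simp
  qed
  finally show ?thesis .
qed



definition gidx :: "nat \<Rightarrow> nat \<Rightarrow> nat \<Rightarrow> nat \<Rightarrow> nat" where
  "gidx n K j c = (if c < n - K then c else n - K + j)"

definition Qc :: "nat \<Rightarrow> nat \<Rightarrow> nat \<Rightarrow> complex mat" where
  "Qc n K j = mat n (n - K + 1) (\<lambda>(p, c). if p = gidx n K j c then 1 else 0)"

lemma Qc_carrier: "Qc n K j \<in> carrier_mat n (n - K + 1)"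
  unfolding Qc_def by simp

lemma Qc_dim[simp]: "dim_col (Qc n K j) = n - K + 1" "dim_row (Qc n K j) = n"
  unfolding Qc_def by simp_all

lemma gidx_lt: "K \<le> n \<Longrightarrow> j < K \<Longrightarrow> c < n - K + 1 \<Longrightarrow> gidx n K j c < n"
  unfolding gidx_def by auto

lemma Qc_col: assumes "K \<le> n" "j < K" "c < n - K + 1"
  shows "col (Qc n K j) c = unit_vec n (gidx n K j c)"
  using assms gidx_lt[OF assms] unfolding Qc_def by (intro eq_vecI) auto

lemma Qc_rank: assumes K: "K \<le> n" and j: "j < K"
  shows "vec_space.rank n (Qc n K j) = n - K + 1"
proof -
  interpret Vn: vec_space "TYPE(complex)" n .
  let ?d = "n - K + 1"
  have inj: "inj_on (gidx n K j) {0..<?d}"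
    unfolding gidx_def inj_on_def using j by auto
  have cols: "cols (Qc n K j) = map (\<lambda>c. unit_vec n (gidx n K j c)) [0..<?d]"
    unfolding cols_def using Qc_col[OF K j] Qc_carrier[of n K j] by auto
  have dist: "distinct (cols (Qc n K j))"
    unfolding cols distinct_map
  proof
    show "inj_on (\<lambda>c. unit_vec n (gidx n K j c) :: complex vec) (set [0..<?d])"
      using inj gidx_lt[OF K j] unfolding inj_on_def by auto
  qed simp
  have sub: "set (cols (Qc n K j)) \<subseteq> set (unit_vecs n)"
    unfolding cols unit_vecs_def using gidx_lt[OF K j] by auto
  have "Vn.lin_indpt (set (unit_vecs n))"
    using Vn.unit_vecs_basis unfolding Vn.basis_def by blast
  hence li: "Vn.lin_indpt (set (cols (Qc n K j)))"
    using Vn.supset_ld_is_ld[OF _ sub] by blast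
  show ?thesis by (rule Vn.lin_indpt_full_rank[OF Qc_carrier dist li])
qed

lemma cond_holds:
  fixes h :: "nat \<times> nat \<times> nat \<times> nat \<Rightarrow> complex"
  assumes MN: "M \<le> N" and KML: "K \<le> M * L" and i: "i < K"
    and dets: "\<forall>t<L. det (mat M M (\<lambda>(r, c). h (i, t, r, c))) \<noteq> 0"
  shows "\<not> desired_space L N M h (Qc (M * L) K) i \<subseteq> interference_space K L N M h (Qc (M * L) K) i"
proof
  define n where "n = M * L"
  define m where "m = N * L"
  interpret Vm: vec_space "TYPE(complex)" m .
  define q where "q = n - K + i"
  define t where "t = q div M"
  define a where "a = q mod M"
  define B where "B = mat M M (\<lambda>(r, c). h (i, t, r, c))"
  define phi where "phi = vec (N * L) (\<lambda>p. if p div N = t \<and> p mod N < M then adj_mat B $$ (a, p mod N) else (0::complex))"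
  let ?H = "chan_mat L N M h i"
  have Kn: "K \<le> n" using KML n_def by simp
  have qn: "q < n" using Kn i unfolding q_def by auto
  have M0: "M > 0" using qn n_def by (cases M) auto
  have tL: "t < L" using qn M0 unfolding t_def n_def by (simp add: less_mult_imp_div_less mult.commute)
  have fv: "scalar_prod phi (col ?H k) = (if k = q then det B else 0)" if "k < M * L" for k
    using functional_value[OF MN qn[unfolded n_def] that, of h i] unfolding phi_def B_def t_def a_def by simp
  have detB: "det B \<noteq> 0" using dets tL unfolding B_def by auto
  have HC: "?H \<in> carrier_mat m n" unfolding m_def n_def by (rule chan_mat_carrier)
  have phiC: "phi \<in> carrier_vec m" unfolding phi_def m_def by simp
  have colHQ: "col (?H * Qc n K j) c = col ?H (gidx n K j c)" if "j < K" "c < n - K + 1" for j c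
  proof -
    have "col (?H * Qc n K j) c = ?H *\<^sub>v col (Qc n K j) c" using col_mult2[OF HC Qc_carrier that(2)] by simp
    also have "\<dots> = ?H *\<^sub>v unit_vec n (gidx n K j c)" using Qc_col[OF Kn that] by simp
    also have "\<dots> = col ?H (gidx n K j c)" by (rule mult_unit_vec_col[OF HC gidx_lt[OF Kn that]])
    finally show ?thesis .
  qed
  have HQC: "?H * Qc n K j \<in> carrier_mat m (n - K + 1)" for j using HC Qc_carrier by auto
  define v0 where "v0 = col (?H * Qc n K i) (n - K)"
  have v0: "v0 = col ?H q" unfolding v0_def using colHQ[OF i, of "n - K"] unfolding gidx_def q_def by simp
  have "v0 \<in> set (cols (?H * Qc n K i))" unfolding v0_def using HQC[of i] by (auto simp: cols_def)
  moreover have "set (cols (?H * Qc n K i)) \<subseteq> carrier_vec m" using HQC[of i] cols_dim by blast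
  ultimately have "v0 \<in> Vm.span (set (cols (?H * Qc n K i)))" using Vm.in_own_span by blast
  hence v0D: "v0 \<in> desired_space L N M h (Qc (M * L) K) i"
    unfolding desired_space_def vec_space.col_space_def m_def n_def by simp
  have phiv0: "scalar_prod phi v0 \<noteq> 0" using fv[of q] qn detB unfolding v0 n_def by simp
  have gens: "(\<Union>j\<in>{j. j < K \<and> j \<noteq> i}. set (cols (?H * Qc n K j))) \<subseteq> {x \<in> carrier_vec m. scalar_prod phi x = 0}"
  proof
    fix x assume "x \<in> (\<Union>j\<in>{j. j < K \<and> j \<noteq> i}. set (cols (?H * Qc n K j)))"
    then obtain j where j: "j < K" "j \<noteq> i" and xj: "x \<in> set (cols (?H * Qc n K j))" by auto
    then obtain c where c0: "c < length (cols (?H * Qc n K j))" and x: "x = cols (?H * Qc n K j) ! c"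
      by (metis in_set_conv_nth)
    have c: "c < n - K + 1" using c0 by simp
    have x: "x = col (?H * Qc n K j) c" using x c0 by simp
    have g: "gidx n K j c \<noteq> q" "gidx n K j c < n" using j c gidx_lt[OF Kn j(1) c] unfolding gidx_def q_def by auto
    have "x = col ?H (gidx n K j c)" using colHQ[OF j(1) c] x by simp
    moreover have "x \<in> carrier_vec m" using x HQC[of j] c by auto
    ultimately show "x \<in> {x \<in> carrier_vec m. scalar_prod phi x = 0}" using fv[of "gidx n K j c"] g n_def by auto
  qed
  have "interference_space K L N M h (Qc (M * L) K) i \<subseteq> {x \<in> carrier_vec m. scalar_prod phi x = 0}"
    unfolding interference_space_def m_def[symmetric] n_def[symmetric]
    by (rule Vm.span_is_subset[OF gens submodule_kernel[OF phiC]])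
  moreover assume "desired_space L N M h (Qc (M * L) K) i \<subseteq> interference_space K L N M h (Qc (M * L) K) i"
  ultimately show False using v0D phiv0 by blast
qed



lemma finite_chan_idx: "finite (chan_idx K L N M)"
proof -
  have "chan_idx K L N M \<subseteq> {..<K} \<times> {..<L} \<times> {..<N} \<times> {..<M}" unfolding chan_idx_def by auto
  thus ?thesis by (rule finite_subset) auto
qed

lemma AE_ex:
  assumes "finite I" and "AE h in CM I. P h"
  shows "\<exists>h\<in>space (CM I). P h"
proof (rule ccontr)
  assume nex: "\<not> ?thesis"
  from assms(2) obtain Z where Z: "{x \<in> space (CM I). \<not> P x} \<subseteq> Z" "emeasure (CM I) Z = 0" "Z \<in> sets (CM I)"
    by (rule AE_E)
  have "space (CM I) \<subseteq> Z" using Z(1) nex by auto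
  hence "emeasure (CM I) (space (CM I)) \<le> emeasure (CM I) Z" by (intro emeasure_mono Z(3))
  hence "emeasure (CM I) (space (CM I)) = 0" using Z(2) by simp
  thus False using space_CM_nonnull[OF assms(1)] by simp
qed



theorem corollary1:
  fixes K L M N :: nat
  assumes "0 < K" and "0 < L" and "0 < M" and "0 < N" and "M \<le> N"
    and "K \<le> M * L"
  shows "(real (M * L) - real K + 1) / real (M * L) \<in> SpAC_set K L M N \<and>
         (\<forall>s \<in> SpAC_set K L M N. s \<le> (real (M * L) - real K + 1) / real (M * L))"
proof
  have K0: "0 < K" and MN: "M \<le> N" and KML: "K \<le> M * L" using assms by auto
  have fin: "finite (chan_idx K L N M)" by (rule finite_chan_idx)
  have meas: "channel_measure K L N M = CM (chan_idx K L N M)" unfolding channel_measure_def ..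
  have dets: "AE h in channel_measure K L N M. \<forall>it\<in>{..<K} \<times> {..<L}.
      det (mat M M (\<lambda>(r, c). h (fst it, snd it, r, c))) \<noteq> 0"
  proof (subst AE_finite_all)
    show "finite ({..<K} \<times> {..<L})" by simp
    show "\<forall>it\<in>{..<K} \<times> {..<L}. AE h in channel_measure K L N M. det (mat M M (\<lambda>(r, c). h (fst it, snd it, r, c))) \<noteq> 0"
    proof
      fix it assume it: "it \<in> {..<K} \<times> {..<L}"
      define \<sigma> where "\<sigma> = (\<lambda>(r::nat, c::nat). (fst it, snd it, r, c))"
      have "\<forall>r<M. \<forall>c<M. \<sigma> (r, c) \<in> chan_idx K L N M"
        using it MN unfolding \<sigma>_def chan_idx_def by auto
      moreover have "inj_on \<sigma> ({..<M} \<times> {..<M})" unfolding \<sigma>_def inj_on_def by auto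
      ultimately obtain Z where Z: "Z \<in> null_sets (CM (chan_idx K L N M))"
        "{h \<in> space (CM (chan_idx K L N M)). det (mat M M (\<lambda>(r, c). h (\<sigma> (r, c)))) = 0} \<subseteq> Z"
        using det_null[OF fin, of M \<sigma>] by blast
      show "AE h in channel_measure K L N M. det (mat M M (\<lambda>(r, c). h (fst it, snd it, r, c))) \<noteq> 0"
      proof (rule AE_I'[OF Z(1)[folded meas]])
        show "{x \<in> space (channel_measure K L N M). \<not> det (mat M M (\<lambda>(r, c). x (fst it, snd it, r, c))) \<noteq> 0} \<subseteq> Z"
          using Z(2) unfolding meas \<sigma>_def by simp
      qed
    qed
  qed
  let ?d = "M * L - K + 1"
  have ach: "achievable K L M N ?d"
    unfolding achievable_def
  proof (intro exI conjI allI impI)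
    fix j assume "j < K"
    thus "Qc (M * L) K j \<in> carrier_mat (M * L) ?d" "vec_space.rank (M * L) (Qc (M * L) K j) = ?d"
      using Qc_carrier Qc_rank[OF KML] by auto
  next
    show "AE h in channel_measure K L N M. \<forall>i<K. \<not> desired_space L N M h (Qc (M * L) K) i
        \<subseteq> interference_space K L N M h (Qc (M * L) K) i"
      using dets
    proof (rule AE_mp[OF _ AE_I2], intro impI allI)
      fix h :: "nat \<times> nat \<times> nat \<times> nat \<Rightarrow> complex" and i assume H: "\<forall>it\<in>{..<K} \<times> {..<L}. det (mat M M (\<lambda>(r, c). h (fst it, snd it, r, c))) \<noteq> 0"
        and i: "i < K"
      have "\<forall>t<L. det (mat M M (\<lambda>(r, c). h (i, t, r, c))) \<noteq> 0"
        using H i by auto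
      thus "\<not> desired_space L N M h (Qc (M * L) K) i \<subseteq> interference_space K L N M h (Qc (M * L) K) i"
        by (rule cond_holds[OF MN KML i])
    qed
  qed
  have "real ?d = real (M * L) - real K + 1" using KML by (simp add: of_nat_diff)
  thus "(real (M * L) - real K + 1) / real (M * L) \<in> SpAC_set K L M N"
    unfolding SpAC_set_def using ach by force
next
  have K0: "0 < K" and MN: "M \<le> N" and KML: "K \<le> M * L" using assms by auto
  have n0: "0 < real (M * L)" using assms by simp
  have fin: "finite (chan_idx K L N M)" by (rule finite_chan_idx)
  show "\<forall>s\<in>SpAC_set K L M N. s \<le> (real (M * L) - real K + 1) / real (M * L)"
  proof
    fix s assume "s \<in> SpAC_set K L M N"
    then obtain d where s: "s = real d / real (M * L)" and ach: "achievable K L M N d"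
      unfolding SpAC_set_def by auto
    then obtain Q where Q: "\<forall>j<K. Q j \<in> carrier_mat (M * L) d \<and> vec_space.rank (M * L) (Q j) = d"
      and AE: "AE h in channel_measure K L N M. \<forall>i<K. \<not> desired_space L N M h Q i \<subseteq> interference_space K L N M h Q i"
      unfolding achievable_def by blast
    obtain h where h: "\<forall>i<K. \<not> desired_space L N M h Q i \<subseteq> interference_space K L N M h Q i"
      using AE_ex[OF fin AE[unfolded channel_measure_def]] by blast
    have "d + K - 1 \<le> M * L"
    proof (rule converse_bound[OF K0 Q])
      show "\<forall>i<K. chan_mat L N M h i \<in> carrier_mat (N * L) (M * L)" using chan_mat_carrier by blast
      show "\<forall>i<K. \<not> vec_space.col_space (N * L) (chan_mat L N M h i * Q i) \<subseteq>
        module.span class_ring (module_vec TYPE(complex) (N * L))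
          (\<Union>j\<in>{j. j < K \<and> j \<noteq> i}. set (cols (chan_mat L N M h i * Q j)))"
        using h unfolding desired_space_def interference_space_def by simp
    qed
    hence "real d \<le> real (M * L) - real K + 1" using K0 by linarith
    thus "s \<le> (real (M * L) - real K + 1) / real (M * L)"
      unfolding s using n0 by (simp add: divide_right_mono)
  qed
qed


end
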